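(* In the setting described in the context, let $i\in[m]$, $S\subseteq[k]$ and $t\in[k]\setminus S$. Then $$\big\|\mathsf{P}_{Y_i}\mathsf{P}_{\Omega_{-i}Z|W,Y_i^S=\perp^S,Y_i^{\overline{S}}}-\mathsf{P}_{Y_i}\mathsf{P}_{\Omega_{-i}Z|W,Y_i^{S\cup\{t\}}=\perp^{S\cup\{t\}},Y_i^{\overline{S}\setminus\{t\}}}\big\|\le 2\alpha^{-(|S|+1)}\big\|\mathsf{P}_{Y_i}\mathsf{P}_{Z\Omega_{-i}|W,Y_i}-\mathsf{P}_{Y_i}\mathsf{P}_{Z\Omega_{-i}|W,Y_i^{-t}}\big\|.$$
   Context: Let $G=(\mathcal{X},\mathcal{A},\mu,V)$ be a $k$-player game: $\mathcal{X}=\mathcal{X}^1\times\cdots\times\mathcal{X}^k$, $\mathcal{A}=\mathcal{A}^1\times\cdots\times\mathcal{A}^k$ finite, $\mu$ a distribution on $\mathcal{X}$, $V:\mathcal{X}\times\mathcal{A}\to\{0,1\}$. Assume $G$ is $\alpha$-anchored ($0<\alpha\le1$) with anchor sets $\mathcal{X}^t_\perp\subseteq\mathcal{X}^t$: the marginal probability that $x^t\in\mathcal{X}^t_\perp$ is at least $\alpha$ for each $t$, and $\mu(x)=\mu(x|_{\overline{F}_x})\prod_{t\in F_x}\mu(x^t)$ for all $x$, where $F_x=\{t:x^t\in\mathcal{X}^t_\perp\}$, $\overline F_x=[k]\setminus F_x$, and $\mu(x|_S)$, $\mu(x^t)$ are marginals. Fix $n$, integers $1\le m<n$, $C=\{m+1,\dots,n\}$,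 and a deterministic strategy for $G^n$, i.e. functions $f^t:(\mathcal{X}^t)^n\to(\mathcal{A}^t)^n$. Let $X=(X_1,\dots,X_n)$, $X_i=(X_i^1,\dots,X_i^k)$, be distributed as $\mu^{\otimes n}$, let $(A_1^t,\dots,A_n^t)=f^t(X_1^t,\dots,X_n^t)$, $A_i=(A_i^1,\dots,A_i^k)$, and $Z=(A_j)_{j\in C}$. Let $W$ be the event that $V(X_j,A_j)=1$ for all $j\in C$, with $\Pr(W)>0$. For each $i,t$ let $Y_i^t=X_i^t$ if $X_i^t\notin\mathcal{X}^t_\perp$ and $Y_i^t=\perp$ otherwise; $Y_i=(Y_i^1,\dots,Y_i^k)$; for $S\subseteq[k]$, $Y_i^S=(Y_i^s)_{s\in S}$, $\overline S=[k]\setminus S$, $\perp^S$ is the all-$\perp$ tuple indexed by $S$, and $Y_i^{-t}=Y_i^{[k]\setminus\{t\}}$. For $i\in[m]$ let $D_i$ be a uniformly random subset of $[k]$ of size $k-1$, independent of each other and of $X$; $M_i=Y_i^{D_i}$, $\Omega_i=(D_i,M_i)$; for $j\in C$, $\Omega_j=X_j$. $\Omega_{-i}$ is $(\Omega_1,\dots,\Omega_n)$ with $\Omega_i$ omitted. Notation: for random variables $R\subseteq$ components of $Y_i$, $\mathsf{P}_{Y_i}\mathsf{P}_{\Omega_{-i}Z|W,Y_i^{S}=\perp^S,Y_i^{T}}$ denotes the distribution $(y,\omega,z)\mapsto\mathsf{P}_{Y_i}(y)\,\mathsf{P}_{\Omega_{-i}Z|W,Y_i^S=\perp^S,Y_i^{T}=y^{T}}(\omega,z)$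 (and similarly with no fixed part); $\|\cdot\|$ is total variation distance. *)

theory Defs
  imports Complex_Main "HOL-Library.FuncSet"
begin

text \<open>Conventions: players are indexed by {1..k}, coordinates by {1..n}.  The value bottom is represented by None.\<close>

definition pr :: "'w set \<Rightarrow> ('w \<Rightarrow> real) \<Rightarrow> ('w \<Rightarrow> bool) \<Rightarrow> real" where
  "pr \<Omega> w E = (\<Sum>\<omega>\<in>\<Omega>. if E \<omega> then w \<omega> else 0)"

text \<open>Conditional probability P(R = r | E); equals 0 if Pr(E) = 0.\<close>
definition cpr :: "'w set \<Rightarrow> ('w \<Rightarrow> real) \<Rightarrow> ('w \<Rightarrow> 'r) \<Rightarrow> ('w \<Rightarrow> bool) \<Rightarrow> 'r \<Rightarrow> real" where
  "cpr \<Omega> w R E r = pr \<Omega> w (\<lambda>\<omega>. R \<omega> = r \<and> E \<omega>) / pr \<Omega> w E"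

definition prod_cond :: "'w set \<Rightarrow> ('w \<Rightarrow> real) \<Rightarrow> ('w \<Rightarrow> 'y) \<Rightarrow> ('w \<Rightarrow> 'r)
    \<Rightarrow> ('w \<Rightarrow> bool) \<Rightarrow> ('y \<Rightarrow> 'w \<Rightarrow> bool) \<Rightarrow> 'y \<times> 'r \<Rightarrow> real" where
  "prod_cond \<Omega> w Y R E Cd = (\<lambda>(y, r). pr \<Omega> w (\<lambda>\<omega>. Y \<omega> = y) * cpr \<Omega> w R (\<lambda>\<omega>. E \<omega> \<and> Cd y \<omega>) r)"

definition tvd :: "'u set \<Rightarrow> ('u \<Rightarrow> real) \<Rightarrow> ('u \<Rightarrow> real) \<Rightarrow> real" where
  "tvd U p q = (1/2) * (\<Sum>u\<in>U. \<bar>p u - q u\<bar>)"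

definition marg :: "nat \<Rightarrow> (nat \<Rightarrow> 'q set) \<Rightarrow> ((nat \<Rightarrow> 'q) \<Rightarrow> real) \<Rightarrow> nat set \<Rightarrow> (nat \<Rightarrow> 'q) \<Rightarrow> real" where
  "marg k Xs \<mu> S x = (\<Sum>x'\<in>PiE {1..k} Xs. if (\<forall>s\<in>S. x' s = x s) then \<mu> x' else 0)"

definition is_game :: "nat \<Rightarrow> (nat \<Rightarrow> 'q set) \<Rightarrow> (nat \<Rightarrow> 'a set) \<Rightarrow> ((nat \<Rightarrow> 'q) \<Rightarrow> real) \<Rightarrow> bool" where
  "is_game k Xs As \<mu> \<longleftrightarrow>
     (\<forall>t\<in>{1..k}. finite (Xs t) \<and> finite (As t)) \<and>
     (\<forall>x\<in>PiE {1..k} Xs. 0 \<le> \<mu> x) \<and> (\<Sum>x\<in>PiE {1..k} Xs. \<mu> x) = 1"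

definition anchored :: "nat \<Rightarrow> (nat \<Rightarrow> 'q set) \<Rightarrow> ((nat \<Rightarrow> 'q) \<Rightarrow> real) \<Rightarrow> real \<Rightarrow> (nat \<Rightarrow> 'q set) \<Rightarrow> bool" where
  "anchored k Xs \<mu> \<alpha> Xperp \<longleftrightarrow> 0 < \<alpha> \<and> \<alpha> \<le> 1 \<and>
     (\<forall>t\<in>{1..k}. Xperp t \<subseteq> Xs t \<and>
        \<alpha> \<le> (\<Sum>x\<in>PiE {1..k} Xs. if x t \<in> Xperp t then \<mu> x else 0)) \<and>
     (\<forall>x\<in>PiE {1..k} Xs.
        \<mu> x = marg k Xs \<mu> ({1..k} - {t\<in>{1..k}. x t \<in> Xperp t}) x *
              (\<Prod>t\<in>{t\<in>{1..k}. x t \<in> Xperp t}. marg k Xs \<mu> {t} x))"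

text \<open>Deterministic strategy for G^n: f t maps player t's n questions to n answers.\<close>
definition strategy :: "nat \<Rightarrow> nat \<Rightarrow> (nat \<Rightarrow> 'q set) \<Rightarrow> (nat \<Rightarrow> 'a set) \<Rightarrow> (nat \<Rightarrow> (nat \<Rightarrow> 'q) \<Rightarrow> (nat \<Rightarrow> 'a)) \<Rightarrow> bool" where
  "strategy k n Xs As f \<longleftrightarrow>
     (\<forall>t\<in>{1..k}. \<forall>xs\<in>PiE {1..n} (\<lambda>_. Xs t). f t xs \<in> Pi {1..n} (\<lambda>_. As t))"

definition Dsets :: "nat \<Rightarrow> nat set set" where
  "Dsets k = {D. D \<subseteq> {1..k} \<and> card D = k - 1}"

text \<open>Sample points (x, d): x i t = X_i^t, d i = D_i.\<close>
definition Samp :: "nat \<Rightarrow> nat \<Rightarrow> nat \<Rightarrow> (nat \<Rightarrow> 'q set) \<Rightarrow> ((nat \<Rightarrow> nat \<Rightarrow> 'q) \<times> (nat \<Rightarrow> nat set)) set" where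
  "Samp k n m Xs = PiE {1..n} (\<lambda>_. PiE {1..k} Xs) \<times> PiE {1..m} (\<lambda>_. Dsets k)"

definition wt :: "nat \<Rightarrow> nat \<Rightarrow> nat \<Rightarrow> ((nat \<Rightarrow> 'q) \<Rightarrow> real) \<Rightarrow> (nat \<Rightarrow> nat \<Rightarrow> 'q) \<times> (nat \<Rightarrow> nat set) \<Rightarrow> real" where
  "wt k n m \<mu> = (\<lambda>(x, d). (\<Prod>i\<in>{1..n}. \<mu> (x i)) * (\<Prod>i\<in>{1..m}. 1 / real (card (Dsets k))))"

definition ans :: "nat \<Rightarrow> nat \<Rightarrow> (nat \<Rightarrow> (nat \<Rightarrow> 'q) \<Rightarrow> (nat \<Rightarrow> 'a)) \<Rightarrow> (nat \<Rightarrow> nat \<Rightarrow> 'q) \<times> (nat \<Rightarrow> nat set) \<Rightarrow> nat \<Rightarrow> (nat \<Rightarrow> 'a)" where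
  "ans k n f \<omega> j = (\<lambda>t\<in>{1..k}. f t (\<lambda>i\<in>{1..n}. fst \<omega> i t) j)"

definition Zrv where
  "Zrv k n m f \<omega> = (\<lambda>j\<in>{m+1..n}. ans k n f \<omega> j)"

definition Wev where
  "Wev k n m f V \<omega> \<longleftrightarrow> (\<forall>j\<in>{m+1..n}. V (fst \<omega> j) (ans k n f \<omega> j))"

definition Yrv :: "nat \<Rightarrow> (nat \<Rightarrow> 'q set) \<Rightarrow> nat \<Rightarrow> (nat \<Rightarrow> nat \<Rightarrow> 'q) \<times> (nat \<Rightarrow> nat set) \<Rightarrow> nat \<Rightarrow> 'q option" where
  "Yrv k Xperp i \<omega> = (\<lambda>t\<in>{1..k}. if fst \<omega> i t \<in> Xperp t then None else Some (fst \<omega> i t))"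

text \<open>Omega_j = (D_j, M_j) with M_j = Y_j^{D_j} for j <= m, and Omega_j = X_j otherwise.\<close>
definition Omg where
  "Omg k m Xperp j \<omega> = (if j \<le> m then Inl (snd \<omega> j, restrict (Yrv k Xperp j \<omega>) (snd \<omega> j)) else Inr (fst \<omega> j))"

definition Omg_minus where
  "Omg_minus k n m Xperp i \<omega> = (\<lambda>j\<in>{1..n} - {i}. Omg k m Xperp j \<omega>)"

text \<open>Conditioning event Y_i^S = bottom^S and Y_i^T = y^T.\<close>
definition condY where
  "condY Y S T = (\<lambda>y \<omega>. restrict (Y \<omega>) S = (\<lambda>s\<in>S. None) \<and> restrict (Y \<omega>) T = restrict y T)"

text \<open>The distribution P_{Y_i} P_{Omega_{-i} Z | W, Y_i^S = bottom^S, Y_i^T}.\<close>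
definition Pdist where
  "Pdist k n m Xs \<mu> Xperp f V i S T =
     prod_cond (Samp k n m Xs) (wt k n m \<mu>) (Yrv k Xperp i)
       (\<lambda>\<omega>. (Omg_minus k n m Xperp i \<omega>, Zrv k n m f \<omega>)) (Wev k n m f V)
       (condY (Yrv k Xperp i) S T)"

text \<open>A finite set containing the supports of all the distributions Pdist.\<close>
definition Usupp where
  "Usupp k n m Xs Xperp f i =
     Yrv k Xperp i ` Samp k n m Xs \<times> (\<lambda>\<omega>. (Omg_minus k n m Xperp i \<omega>, Zrv k n m f \<omega>)) ` Samp k n m Xs"

end

theory Submission
  imports Defs
begin
lemma sum_Pow_insert:
  assumes "finite F" "u \<notin> F"
  shows "(\<Sum>F'\<in>Pow (insert u F). g F') = (\<Sum>F'\<in>Pow F. g F') + (\<Sum>F'\<in>Pow F. g (insert u F'))"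
proof -
  have "(\<Sum>F'\<in>Pow (insert u F). g F') = (\<Sum>F'\<in>Pow F. g F') + (\<Sum>F'\<in>insert u ` Pow F. g F')"
    unfolding Pow_insert using assms by (intro sum.union_disjoint) auto
  also have "(\<Sum>F'\<in>insert u ` Pow F. g F') = (\<Sum>F'\<in>Pow F. g (insert u F'))"
    using assms by (subst sum.reindex) (auto simp: inj_on_def)
  finally show ?thesis .
qed

lemma prodsum_id:
  fixes p :: "nat \<Rightarrow> real"
  assumes "finite R" "F \<subseteq> R"
  shows "(\<Sum>F'\<in>Pow F. (\<Prod>s\<in>F'. p s) * (\<Prod>s\<in>R-F'. 1 - p s)) = (\<Prod>s\<in>R-F. 1 - p s)"
proof -
  have fF: "finite F" using assms finite_subset by blast
  have "(\<Sum>F'\<in>Pow F. (\<Prod>s\<in>F'. p s) * (\<Prod>s\<in>R-F'. 1 - p s))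
      = (\<Sum>F'\<in>Pow F. ((\<Prod>s\<in>F'. p s) * (\<Prod>s\<in>F-F'. 1 - p s)) * (\<Prod>s\<in>R-F. 1 - p s))"
  proof (rule sum.cong)
    fix F' assume "F' \<in> Pow F"
    hence "R - F' = (F - F') \<union> (R - F)" "(F - F') \<inter> (R - F) = {}" using assms by auto
    hence "(\<Prod>s\<in>R-F'. 1 - p s) = (\<Prod>s\<in>F-F'. 1 - p s) * (\<Prod>s\<in>R-F. 1 - p s)"
      using assms fF by (simp add: prod.union_disjoint)
    thus "(\<Prod>s\<in>F'. p s) * (\<Prod>s\<in>R-F'. 1 - p s) = ((\<Prod>s\<in>F'. p s) * (\<Prod>s\<in>F-F'. 1 - p s)) * (\<Prod>s\<in>R-F. 1 - p s)"
      by simp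
  qed simp
  also have "\<dots> = (\<Sum>F'\<in>Pow F. (\<Prod>s\<in>F'. p s) * (\<Prod>s\<in>F-F'. 1 - p s)) * (\<Prod>s\<in>R-F. 1 - p s)"
    by (simp add: sum_distrib_right)
  also have "(\<Sum>F'\<in>Pow F. (\<Prod>s\<in>F'. p s) * (\<Prod>s\<in>F-F'. 1 - p s)) = (\<Prod>s\<in>F. p s + (1 - p s))"
    using prod_add[OF fF, of p "\<lambda>s. 1 - p s"] by simp
  finally show ?thesis by simp
qed

lemma prod_nonneg_le1:
  fixes p :: "nat \<Rightarrow> real"
  assumes "\<forall>s\<in>F. 0 \<le> p s \<and> p s \<le> 1"
  shows "0 \<le> (\<Prod>s\<in>F. p s) \<and> (\<Prod>s\<in>F. p s) \<le> 1"
  using assms by (simp add: prod_nonneg prod_le_1)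

lemma indep_pattern:
  fixes p :: "nat \<Rightarrow> real" and \<pi> :: "nat set \<Rightarrow> real"
  assumes "finite R" "\<forall>s\<in>R. 0 < p s \<and> p s \<le> 1" "\<forall>F\<subseteq>R. \<pi> F \<ge> 0"
    "\<forall>F\<subseteq>R. \<pi> F = (\<Prod>s\<in>F. p s) * (\<Sum>F'\<in>Pow F. \<pi> F')"
  shows "\<forall>F\<subseteq>R. \<pi> F = (\<Sum>F'\<in>Pow R. \<pi> F') * (\<Prod>s\<in>F. p s) * (\<Prod>s\<in>R-F. 1 - p s)"
  using assms
proof (induction R arbitrary: \<pi> rule: finite_induct)
  case empty
  show ?case by simp
next
  case (insert u R \<pi>)
  have pR: "\<forall>s\<in>R. 0 < p s \<and> p s \<le> 1" using insert.prems(1) by auto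
  have pu: "0 < p u" "p u \<le> 1" using insert.prems(1) by auto
  define A where "A = (\<Sum>F'\<in>Pow R. \<pi> F')"
  have IHpi: "\<forall>F\<subseteq>R. \<pi> F = A * (\<Prod>s\<in>F. p s) * (\<Prod>s\<in>R-F. 1 - p s)"
  proof -
    have h3: "\<forall>F\<subseteq>R. \<pi> F \<ge> 0" using insert.prems(2) by blast
    have h4: "\<forall>F\<subseteq>R. \<pi> F = (\<Prod>s\<in>F. p s) * (\<Sum>F'\<in>Pow F. \<pi> F')"
      using insert.prems(3) by blast
    show ?thesis unfolding A_def by (rule insert.IH[OF pR h3 h4])
  qed
  define \<sigma> where "\<sigma> F = \<pi> (insert u F)" for F
  have fin: "\<And>F. F \<subseteq> R \<Longrightarrow> finite F" using insert.hyps finite_subset by blast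
  have uF: "\<And>F. F \<subseteq> R \<Longrightarrow> u \<notin> F" using insert.hyps by blast
  have sumpi: "(\<Sum>F'\<in>Pow F. \<pi> F') = A * (\<Prod>s\<in>R-F. 1 - p s)" if "F \<subseteq> R" for F
  proof -
    have "(\<Sum>F'\<in>Pow F. \<pi> F') = (\<Sum>F'\<in>Pow F. A * ((\<Prod>s\<in>F'. p s) * (\<Prod>s\<in>R-F'. 1 - p s)))"
      using IHpi that by (intro sum.cong) (auto simp: mult.assoc)
    also have "\<dots> = A * (\<Prod>s\<in>R-F. 1 - p s)"
      using prodsum_id[OF insert.hyps(1) that, of p] by (simp add: sum_distrib_left[symmetric])
    finally show ?thesis .
  qed
  have E: "\<sigma> F = p u * (\<Prod>s\<in>F. p s) * (A * (\<Prod>s\<in>R-F. 1 - p s) + (\<Sum>F'\<in>Pow F. \<sigma> F'))"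
    if "F \<subseteq> R" for F
  proof -
    have "\<sigma> F = (\<Prod>s\<in>insert u F. p s) * (\<Sum>F'\<in>Pow (insert u F). \<pi> F')"
      unfolding \<sigma>_def using insert.prems(3) that by (meson insert_mono)
    also have "(\<Prod>s\<in>insert u F. p s) = p u * (\<Prod>s\<in>F. p s)"
      using fin[OF that] uF[OF that] by simp
    also have "(\<Sum>F'\<in>Pow (insert u F). \<pi> F') = (\<Sum>F'\<in>Pow F. \<pi> F') + (\<Sum>F'\<in>Pow F. \<sigma> F')"
      unfolding \<sigma>_def by (rule sum_Pow_insert[OF fin[OF that] uF[OF that]])
    finally show ?thesis using sumpi[OF that] by simp
  qed
  have sig_nn: "\<And>F. F \<subseteq> R \<Longrightarrow> \<sigma> F \<ge> 0" unfolding \<sigma>_def using insert.prems(2) by (meson insert_mono)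
  have Ctot: "(\<Sum>F'\<in>Pow (insert u R). \<pi> F') = A + (\<Sum>F'\<in>Pow R. \<sigma> F')"
    unfolding A_def \<sigma>_def by (rule sum_Pow_insert[OF insert.hyps])
  show ?case
  proof (cases "p u < 1")
    case True
    define c where "c = A * (p u / (1 - p u))"
    have sig: "\<sigma> F = c * (\<Prod>s\<in>F. p s) * (\<Prod>s\<in>R-F. 1 - p s)" if "F \<subseteq> R" for F
      using fin[OF that] that
    proof (induction F rule: finite_psubset_induct)
      case (psubset F)
      have fF: "finite F" by fact
      have sub: "\<forall>F'\<in>Pow F - {F}. \<sigma> F' = c * (\<Prod>s\<in>F'. p s) * (\<Prod>s\<in>R-F'. 1 - p s)"
        using psubset by auto
      have "(\<Sum>F'\<in>Pow F. \<sigma> F') = \<sigma> F + (\<Sum>F'\<in>Pow F - {F}. \<sigma> F')"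
        using fF by (subst sum.remove[of _ F]) auto
      also have "(\<Sum>F'\<in>Pow F - {F}. \<sigma> F') = (\<Sum>F'\<in>Pow F - {F}. c * ((\<Prod>s\<in>F'. p s) * (\<Prod>s\<in>R-F'. 1 - p s)))"
        using sub by (intro sum.cong) (auto simp: mult.assoc)
      also have "\<dots> = c * (\<Sum>F'\<in>Pow F. (\<Prod>s\<in>F'. p s) * (\<Prod>s\<in>R-F'. 1 - p s)) - c * ((\<Prod>s\<in>F. p s) * (\<Prod>s\<in>R-F. 1 - p s))"
        using fF by (subst sum.remove[of "Pow F" F]) (auto simp: sum_distrib_left algebra_simps)
      also have "(\<Sum>F'\<in>Pow F. (\<Prod>s\<in>F'. p s) * (\<Prod>s\<in>R-F'. 1 - p s)) = (\<Prod>s\<in>R-F. 1 - p s)"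
        by (rule prodsum_id[OF insert.hyps(1) psubset.prems])
      finally have S: "(\<Sum>F'\<in>Pow F. \<sigma> F') = \<sigma> F + c * (\<Prod>s\<in>R - F. 1 - p s) - c * ((\<Prod>s\<in>F. p s) * (\<Prod>s\<in>R - F. 1 - p s))"
        by simp
      define P where "P = (\<Prod>s\<in>F. p s)"
      define Q where "Q = (\<Prod>s\<in>R-F. 1 - p s)"
      have pF: "\<forall>s\<in>F. 0 \<le> p s \<and> p s \<le> 1" using pR psubset.prems by force
      have P01: "0 \<le> P" "P \<le> 1" unfolding P_def using prod_nonneg_le1[OF pF] by auto
      have "\<sigma> F = p u * P * (A * Q + (\<sigma> F + c * Q - c * (P * Q)))"
        unfolding P_def Q_def by (subst S[symmetric]) (rule E[OF psubset.prems])
      hence eq: "\<sigma> F * (1 - p u * P) = p u * P * (A * Q + c * Q - c * (P * Q))"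
        by (simp add: algebra_simps)
      have cc: "c * (1 - p u) = A * p u" unfolding c_def using True by (simp add: field_simps)
      hence "c - c * p u * P = p u * (A + c - c * P)" by (simp add: algebra_simps)
      hence "P * Q * (c - c * p u * P) = P * Q * (p u * (A + c - c * P))" by simp
      hence "c * P * Q * (1 - p u * P) = p u * P * (A * Q + c * Q - c * (P * Q))"
        by (simp add: algebra_simps)
      moreover have "1 - p u * P > 0"
      proof -
        have "p u * P \<le> p u * 1" using P01 pu by (intro mult_left_mono) auto
        thus ?thesis using True by linarith
      qed
      ultimately have "\<sigma> F * (1 - p u * P) = (c * P * Q) * (1 - p u * P)" "1 - p u * P \<noteq> 0"
        using eq by auto
      hence "\<sigma> F = c * P * Q" by simp
      thus ?case unfolding P_def Q_def .
    qed
    have sumsig: "(\<Sum>F'\<in>Pow R. \<sigma> F') = c"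
    proof -
      have "(\<Sum>F'\<in>Pow R. \<sigma> F') = (\<Sum>F'\<in>Pow R. c * ((\<Prod>s\<in>F'. p s) * (\<Prod>s\<in>R-F'. 1 - p s)))"
        using sig by (intro sum.cong) (auto simp: mult.assoc)
      also have "\<dots> = c" using prodsum_id[OF insert.hyps(1) order_refl, of p]
        by (simp add: sum_distrib_left[symmetric])
      finally show ?thesis .
    qed
    have CA: "A = (A + c) * (1 - p u)" "c = (A + c) * p u"
      unfolding c_def using True by (auto simp: field_simps)
    show ?thesis
    proof (intro allI impI)
      fix F assume F: "F \<subseteq> insert u R"
      show "\<pi> F = (\<Sum>F'\<in>Pow (insert u R). \<pi> F') * (\<Prod>s\<in>F. p s) * (\<Prod>s\<in>insert u R - F. 1 - p s)"
      proof (cases "u \<in> F")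
        case False
        hence FR: "F \<subseteq> R" using F by auto
        have "insert u R - F = insert u (R - F)" using False by auto
        hence "(\<Prod>s\<in>insert u R - F. 1 - p s) = (1 - p u) * (\<Prod>s\<in>R - F. 1 - p s)"
          using insert.hyps by simp
        thus ?thesis using IHpi FR unfolding Ctot sumsig by (simp add: CA(1)[symmetric] mult_ac)
      next
        case True
        define F0 where "F0 = F - {u}"
        have F0R: "F0 \<subseteq> R" and FF0: "F = insert u F0" and uF0: "u \<notin> F0"
          using F True unfolding F0_def by auto
        have "insert u R - F = R - F0" using FF0 uF0 insert.hyps by auto
        moreover have "(\<Prod>s\<in>F. p s) = p u * (\<Prod>s\<in>F0. p s)"
          using FF0 uF0 fin[OF F0R] by simp
        moreover have "\<pi> F = \<sigma> F0" unfolding \<sigma>_def FF0 ..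
        moreover have "\<sigma> F0 = ((A + c) * p u) * (\<Prod>s\<in>F0. p s) * (\<Prod>s\<in>R-F0. 1 - p s)"
          by (subst CA(2)[symmetric]) (rule sig[OF F0R])
        ultimately show ?thesis unfolding Ctot sumsig by (simp add: mult_ac)
      qed
    qed
  next
    case False
    hence pu1: "p u = 1" using pu by simp
    have zero: "\<pi> F = 0" if "F \<subseteq> R" for F
      using fin[OF that] that
    proof (induction F rule: finite_psubset_induct)
      case (psubset F)
      have fF: "finite F" by fact
      have "(\<Sum>F'\<in>Pow F. \<pi> F') = \<pi> F + (\<Sum>F'\<in>Pow F - {F}. \<pi> F')"
        using fF by (subst sum.remove[of _ F]) auto
      also have "(\<Sum>F'\<in>Pow F - {F}. \<pi> F') = 0"
        using psubset by (intro sum.neutral) auto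
      finally have S: "(\<Sum>F'\<in>Pow F. \<pi> F') = \<pi> F" by simp
      have h: "\<pi> F = (\<Prod>s\<in>F. p s) * \<pi> F"
      proof -
        have "F \<subseteq> insert u R" using psubset.prems by blast
        hence "\<pi> F = (\<Prod>s\<in>F. p s) * (\<Sum>F'\<in>Pow F. \<pi> F')" using insert.prems(3) by blast
        from this[unfolded S] show ?thesis .
      qed
      show ?case
      proof (cases "(\<Prod>s\<in>F. p s) = 1")
        case False
        have "\<pi> F - (\<Prod>s\<in>F. p s) * \<pi> F = 0" by (subst h[symmetric]) simp
        hence "\<pi> F * (1 - (\<Prod>s\<in>F. p s)) = 0" by (simp add: algebra_simps)
        thus ?thesis using False by simp
      next
        case True
        have "\<sigma> F = (\<Sum>F'\<in>Pow F. \<pi> F') + (\<Sum>F'\<in>Pow F. \<sigma> F')"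
        proof -
          have "\<sigma> F = (\<Prod>s\<in>insert u F. p s) * (\<Sum>F'\<in>Pow (insert u F). \<pi> F')"
            unfolding \<sigma>_def using insert.prems(3) psubset.prems by (meson insert_mono)
          also have "(\<Prod>s\<in>insert u F. p s) = 1"
            using fF uF[OF psubset.prems] True pu1 by simp
          also have "(\<Sum>F'\<in>Pow (insert u F). \<pi> F') = (\<Sum>F'\<in>Pow F. \<pi> F') + (\<Sum>F'\<in>Pow F. \<sigma> F')"
            unfolding \<sigma>_def by (rule sum_Pow_insert[OF fF uF[OF psubset.prems]])
          finally show ?thesis by simp
        qed
        moreover have "(\<Sum>F'\<in>Pow F. \<sigma> F') \<ge> \<sigma> F"
        proof (rule member_le_sum)
          show "F \<in> Pow F" by blast
          show "finite (Pow F)" using fF by blast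
          fix x assume "x \<in> Pow F - {F}"
          hence "x \<subseteq> R" using psubset.prems by blast
          thus "0 \<le> \<sigma> x" by (rule sig_nn)
        qed
        ultimately have "\<pi> F \<le> 0" using S by linarith
        moreover have "F \<subseteq> insert u R" using psubset.prems by blast
        hence "\<pi> F \<ge> 0" using insert.prems(2) by blast
        ultimately show ?thesis by linarith
      qed
    qed
    have A0: "A = 0" unfolding A_def using zero by (intro sum.neutral) auto
    have Hs: "\<forall>F\<subseteq>R. \<sigma> F = (\<Prod>s\<in>F. p s) * (\<Sum>F'\<in>Pow F. \<sigma> F')"
    proof (intro allI impI)
      fix F assume F: "F \<subseteq> R"
      have e: "\<sigma> F = p u * (\<Prod>s\<in>F. p s) * (A * (\<Prod>s\<in>R-F. 1 - p s) + (\<Sum>F'\<in>Pow F. \<sigma> F'))"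
        by (rule E[OF F])
      show "\<sigma> F = (\<Prod>s\<in>F. p s) * (\<Sum>F'\<in>Pow F. \<sigma> F')"
        by (subst e) (simp add: A0 pu1)
    qed
    have sig: "\<forall>F\<subseteq>R. \<sigma> F = (\<Sum>F'\<in>Pow R. \<sigma> F') * (\<Prod>s\<in>F. p s) * (\<Prod>s\<in>R-F. 1 - p s)"
      using insert.IH[OF pR _ Hs] sig_nn by blast
    show ?thesis
    proof (intro allI impI)
      fix F assume F: "F \<subseteq> insert u R"
      show "\<pi> F = (\<Sum>F'\<in>Pow (insert u R). \<pi> F') * (\<Prod>s\<in>F. p s) * (\<Prod>s\<in>insert u R - F. 1 - p s)"
      proof (cases "u \<in> F")
        case False
        hence FR: "F \<subseteq> R" using F by auto
        have "insert u R - F = insert u (R - F)" using False by auto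
        hence "(\<Prod>s\<in>insert u R - F. 1 - p s) = 0"
          using insert.hyps pu1 by simp
        thus ?thesis using zero[OF FR] by simp
      next
        case True
        define F0 where "F0 = F - {u}"
        have F0R: "F0 \<subseteq> R" and FF0: "F = insert u F0" and uF0: "u \<notin> F0"
          using F True unfolding F0_def by auto
        have "insert u R - F = R - F0" using FF0 uF0 insert.hyps by auto
        moreover have "(\<Prod>s\<in>F. p s) = (\<Prod>s\<in>F0. p s)"
          using FF0 uF0 fin[OF F0R] pu1 by simp
        moreover have "\<pi> F = \<sigma> F0" unfolding \<sigma>_def FF0 ..
        ultimately show ?thesis using sig F0R Ctot A0 by simp
      qed
    qed
  qed
qed

lemma sum_PiE_split:
  fixes f g :: "_ \<Rightarrow> real"
  assumes fA: "finite A" and fB: "finite B" and disj: "A \<inter> B = {}"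
    and fX: "\<And>i. i \<in> A \<union> B \<Longrightarrow> finite (X i)"
  shows "(\<Sum>x\<in>PiE (A \<union> B) X. f (restrict x A) * g (restrict x B))
       = (\<Sum>u\<in>PiE A X. f u) * (\<Sum>v\<in>PiE B X. g v)"
proof -
  have "(\<Sum>u\<in>PiE A X. f u) * (\<Sum>v\<in>PiE B X. g v) = (\<Sum>u\<in>PiE A X. \<Sum>v\<in>PiE B X. f u * g v)"
    by (rule sum_product)
  also have "\<dots> = (\<Sum>(u,v)\<in>PiE A X \<times> PiE B X. f u * g v)"
    by (rule sum.cartesian_product)
  also have "(\<Sum>x\<in>PiE (A \<union> B) X. f (restrict x A) * g (restrict x B)) = \<dots>"
  proof (rule sum.reindex_bij_witness[of _ "\<lambda>(u,v). (\<lambda>s. if s \<in> A then u s else v s)"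
                                         "\<lambda>x. (restrict x A, restrict x B)"])
    fix x assume x: "x \<in> PiE (A \<union> B) X"
    show "(case (restrict x A, restrict x B) of (u, v) \<Rightarrow> \<lambda>s. if s \<in> A then u s else v s) = x"
      using x by (auto simp: PiE_def extensional_def fun_eq_iff)
    show "(restrict x A, restrict x B) \<in> PiE A X \<times> PiE B X" using x by auto
    show "(case (restrict x A, restrict x B) of (u, v) \<Rightarrow> f u * g v) = f (restrict x A) * g (restrict x B)"
      by simp
  next
    fix b assume b: "b \<in> PiE A X \<times> PiE B X"
    then obtain u v where uv: "b = (u, v)" "u \<in> PiE A X" "v \<in> PiE B X" by auto
    have "restrict (\<lambda>s. if s \<in> A then u s else v s) A = u"
      using uv by (auto simp: PiE_def extensional_def fun_eq_iff)
    moreover have "restrict (\<lambda>s. if s \<in> A then u s else v s) B = v"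
      using uv disj by (auto simp: PiE_def extensional_def fun_eq_iff)
    ultimately show "(\<lambda>x. (restrict x A, restrict x B)) (case b of (u, v) \<Rightarrow> \<lambda>s. if s \<in> A then u s else v s) = b"
      using uv by simp
    show "(case b of (u, v) \<Rightarrow> \<lambda>s. if s \<in> A then u s else v s) \<in> PiE (A \<union> B) X"
      using uv by (auto simp: PiE_def extensional_def Pi_def)
  qed
  finally show ?thesis .
qed


lemma prod_if_all:
  fixes a :: "'i \<Rightarrow> real"
  assumes "finite F"
  shows "(\<Prod>s\<in>F. if P s then a s else 0) = (if \<forall>s\<in>F. P s then \<Prod>s\<in>F. a s else 0)"
proof (cases "\<forall>s\<in>F. P s")
  case True thus ?thesis by (simp cong: prod.cong)
next
  case False
  then obtain s where "s \<in> F" "\<not> P s" by auto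
  thus ?thesis using assms False by (subst prod_zero) auto
qed

lemma sum_if_cond_swap:
  fixes h :: "'a \<Rightarrow> real"
  assumes "finite A"
  shows "(\<Sum>x\<in>A. if P x then h x else 0) = sum h {x\<in>A. P x}"
  using assms by (simp add: sum.inter_filter)

locale anc =
  fixes k :: nat and Xs :: "nat \<Rightarrow> 'q set" and \<mu> :: "(nat \<Rightarrow> 'q) \<Rightarrow> real"
    and \<alpha> :: real and Xperp :: "nat \<Rightarrow> 'q set"
  assumes finX: "\<forall>t\<in>{1..k}. finite (Xs t)"
    and anch: "anchored k Xs \<mu> \<alpha> Xperp"
    and nnmu: "\<forall>x\<in>PiE {1..k} Xs. 0 \<le> \<mu> x"
    and summu: "(\<Sum>x\<in>PiE {1..k} Xs. \<mu> x) = 1"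
begin

definition "pb s = (\<Sum>x\<in>PiE {1..k} Xs. if x s \<in> Xperp s then \<mu> x else 0)"
definition "Fs x = {t\<in>{1..k}. x t \<in> Xperp t}"

lemma finPX: "finite (PiE {1..k} Xs)"
  using finX by (intro finite_PiE) auto

lemma marg_restrict:
  assumes "S \<subseteq> N"
  shows "marg k Xs \<mu> S (restrict x N) = marg k Xs \<mu> S x"
  unfolding marg_def using assms by (intro sum.cong) auto

lemma marg_single: "marg k Xs \<mu> {s} v = (\<Sum>x'\<in>PiE {1..k} Xs. if x' s = v s then \<mu> x' else 0)"
  unfolding marg_def by simp

lemma factor:
  assumes "x \<in> PiE {1..k} Xs"
  shows "\<mu> x = marg k Xs \<mu> ({1..k} - Fs x) x * (\<Prod>t\<in>Fs x. marg k Xs \<mu> {t} x)"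
  using anch assms unfolding anchored_def Fs_def by blast

lemma sum_single_pb:
  assumes s: "s \<in> {1..k}"
  shows "(\<Sum>b\<in>Xs s. if b \<in> Xperp s then (\<Sum>x'\<in>PiE {1..k} Xs. if x' s = b then \<mu> x' else 0) else 0) = pb s"
proof -
  have "(\<Sum>b\<in>Xs s. if b \<in> Xperp s then (\<Sum>x'\<in>PiE {1..k} Xs. if x' s = b then \<mu> x' else 0) else 0)
      = (\<Sum>b\<in>Xs s. \<Sum>x'\<in>PiE {1..k} Xs. if x' s = b then (if b \<in> Xperp s then \<mu> x' else 0) else 0)"
    by (intro sum.cong refl) (auto intro!: sum.cong sum.neutral)
  also have "\<dots> = (\<Sum>x'\<in>PiE {1..k} Xs. \<Sum>b\<in>Xs s. if x' s = b then (if b \<in> Xperp s then \<mu> x' else 0) else 0)"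
    by (rule sum.swap)
  also have "\<dots> = (\<Sum>x'\<in>PiE {1..k} Xs. if x' s \<in> Xperp s then \<mu> x' else 0)"
  proof (rule sum.cong)
    fix x' assume x': "x' \<in> PiE {1..k} Xs"
    have "x' s \<in> Xs s" using x' s by auto
    show "(\<Sum>b\<in>Xs s. if x' s = b then (if b \<in> Xperp s then \<mu> x' else 0) else 0) = (if x' s \<in> Xperp s then \<mu> x' else 0)"
    proof -
      have "finite (Xs s)" using finX s by auto
      thus ?thesis using \<open>x' s \<in> Xs s\<close> by (simp add: sum.delta')
    qed
  qed simp
  finally show ?thesis unfolding pb_def .
qed

end

context anc begin

lemma Hrel:
  assumes G: "G \<subseteq> {1..k}" and F: "F \<subseteq> {1..k} - G"
  shows "(\<Sum>x\<in>PiE {1..k} Xs. if (\<forall>s\<in>G. x s = zv s \<and> x s \<notin> Xperp s) \<and> Fs x = F then \<mu> x else 0)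
       = (\<Prod>s\<in>F. pb s) * (\<Sum>x\<in>PiE {1..k} Xs. if (\<forall>s\<in>G. x s = zv s \<and> x s \<notin> Xperp s) \<and> Fs x \<subseteq> F then \<mu> x else 0)"
proof -
  define N where "N = {1..k} - F"
  define cond where "cond x = (\<forall>s\<in>G. x s = zv s \<and> x s \<notin> Xperp s)" for x :: "nat \<Rightarrow> 'q"
  define condN where "condN u = (cond u \<and> (\<forall>s\<in>N. u s \<notin> Xperp s))" for u :: "nat \<Rightarrow> 'q"
  define fN where "fN u = (if condN u then marg k Xs \<mu> N u else 0)" for u
  define gF where "gF v = (\<Prod>s\<in>F. if v s \<in> Xperp s then marg k Xs \<mu> {s} v else 0)" for v
  have KNF: "{1..k} = N \<union> F" and disj: "N \<inter> F = {}" and GN: "G \<subseteq> N"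
    using F G unfolding N_def by auto
  have fF: "finite F" and fN: "finite N" using F unfolding N_def by (auto intro: finite_subset)
  have FsF: "Fs x = F \<longleftrightarrow> (\<forall>s\<in>F. x s \<in> Xperp s) \<and> (\<forall>s\<in>N. x s \<notin> Xperp s)" for x
    unfolding Fs_def N_def using F by auto
  have FsF': "Fs x \<subseteq> F \<longleftrightarrow> (\<forall>s\<in>N. x s \<notin> Xperp s)" for x
    unfolding Fs_def N_def using F by auto
  have "(\<Sum>x\<in>PiE {1..k} Xs. if cond x \<and> Fs x = F then \<mu> x else 0)
      = (\<Sum>x\<in>PiE {1..k} Xs. if cond x \<and> Fs x = F then marg k Xs \<mu> N x * (\<Prod>s\<in>F. marg k Xs \<mu> {s} x) else 0)"
  proof (rule sum.cong)
    fix x assume x: "x \<in> PiE {1..k} Xs"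
    show "(if cond x \<and> Fs x = F then \<mu> x else 0) = (if cond x \<and> Fs x = F then marg k Xs \<mu> N x * (\<Prod>s\<in>F. marg k Xs \<mu> {s} x) else 0)"
      using factor[OF x] unfolding N_def by auto
  qed simp
  also have "\<dots> = (\<Sum>x\<in>PiE (N \<union> F) Xs. fN (restrict x N) * gF (restrict x F))"
  proof (rule sum.cong)
    show "PiE {1..k} Xs = PiE (N \<union> F) Xs" using KNF by simp
  next
    fix x assume x: "x \<in> PiE (N \<union> F) Xs"
    have c1: "condN (restrict x N) \<longleftrightarrow> cond x \<and> (\<forall>s\<in>N. x s \<notin> Xperp s)"
      unfolding condN_def cond_def using GN by auto
    have m1: "marg k Xs \<mu> N (restrict x N) = marg k Xs \<mu> N x" by (rule marg_restrict) simp
    have g1: "gF (restrict x F) = (if \<forall>s\<in>F. x s \<in> Xperp s then \<Prod>s\<in>F. marg k Xs \<mu> {s} x else 0)"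
    proof -
      have "gF (restrict x F) = (\<Prod>s\<in>F. if x s \<in> Xperp s then marg k Xs \<mu> {s} x else 0)"
        unfolding gF_def by (intro prod.cong refl) (simp add: marg_restrict)
      thus ?thesis using prod_if_all[OF fF] by simp
    qed
    show "(if cond x \<and> Fs x = F then marg k Xs \<mu> N x * (\<Prod>s\<in>F. marg k Xs \<mu> {s} x) else 0)
        = fN (restrict x N) * gF (restrict x F)"
      unfolding fN_def g1 m1 c1 FsF by auto
  qed
  also have "\<dots> = (\<Sum>u\<in>PiE N Xs. fN u) * (\<Sum>v\<in>PiE F Xs. gF v)"
    by (rule sum_PiE_split[OF fN fF disj]) (use finX KNF in auto)
  also have "(\<Sum>v\<in>PiE F Xs. gF v) = (\<Prod>s\<in>F. pb s)"
  proof -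
    define h where "h s b = (if b \<in> Xperp s then (\<Sum>x'\<in>PiE {1..k} Xs. if x' s = b then \<mu> x' else 0) else 0)" for s b
    have "(\<Sum>v\<in>PiE F Xs. gF v) = (\<Sum>v\<in>PiE F Xs. \<Prod>s\<in>F. h s (v s))"
      unfolding gF_def h_def marg_single by simp
    also have "\<dots> = (\<Prod>s\<in>F. \<Sum>b\<in>Xs s. h s b)"
      by (rule prod_sum_PiE[symmetric]) (use fF finX F in auto)
    also have "\<dots> = (\<Prod>s\<in>F. pb s)"
      unfolding h_def using F by (intro prod.cong refl sum_single_pb) auto
    finally show ?thesis .
  qed
  also have "(\<Sum>u\<in>PiE N Xs. fN u) = (\<Sum>x\<in>PiE {1..k} Xs. if cond x \<and> Fs x \<subseteq> F then \<mu> x else 0)"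
  proof -
    have "(\<Sum>u\<in>PiE N Xs. fN u) = (\<Sum>u\<in>PiE N Xs. \<Sum>x'\<in>PiE {1..k} Xs. if u = restrict x' N then (if condN u then \<mu> x' else 0) else 0)"
    proof (rule sum.cong)
      fix u assume u: "u \<in> PiE N Xs"
      have "\<And>x'. x' \<in> PiE {1..k} Xs \<Longrightarrow> (\<forall>s\<in>N. x' s = u s) \<longleftrightarrow> u = restrict x' N"
        using u by (auto simp: PiE_def extensional_def fun_eq_iff)
      thus "fN u = (\<Sum>x'\<in>PiE {1..k} Xs. if u = restrict x' N then (if condN u then \<mu> x' else 0) else 0)"
        unfolding fN_def marg_def by (auto intro!: sum.cong sum.neutral)
    qed simp
    also have "\<dots> = (\<Sum>x'\<in>PiE {1..k} Xs. \<Sum>u\<in>PiE N Xs. if u = restrict x' N then (if condN u then \<mu> x' else 0) else 0)"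
      by (rule sum.swap)
    also have "\<dots> = (\<Sum>x'\<in>PiE {1..k} Xs. if cond x' \<and> Fs x' \<subseteq> F then \<mu> x' else 0)"
    proof (rule sum.cong)
      fix x' assume x': "x' \<in> PiE {1..k} Xs"
      have r: "restrict x' N \<in> PiE N Xs" using x' KNF by auto
      have fin: "finite (PiE N Xs)" using finX KNF fN by (intro finite_PiE) auto
      have c1: "condN (restrict x' N) \<longleftrightarrow> cond x' \<and> Fs x' \<subseteq> F"
        unfolding condN_def cond_def FsF' using GN by auto
      show "(\<Sum>u\<in>PiE N Xs. if u = restrict x' N then (if condN u then \<mu> x' else 0) else 0)
          = (if cond x' \<and> Fs x' \<subseteq> F then \<mu> x' else 0)"
        using fin r c1 by (simp add: sum.delta)
    qed simp
    finally show ?thesis .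
  qed
  finally show ?thesis unfolding cond_def by (simp add: mult.commute)
qed

end

definition yof :: "nat \<Rightarrow> (nat \<Rightarrow> 'q set) \<Rightarrow> (nat \<Rightarrow> 'q) \<Rightarrow> nat \<Rightarrow> 'q option" where
  "yof k Xperp x = (\<lambda>t\<in>{1..k}. if x t \<in> Xperp t then None else Some (x t))"

definition mk :: "nat \<Rightarrow> nat set \<Rightarrow> (nat \<Rightarrow> 'b option) \<Rightarrow> nat \<Rightarrow> 'b option" where
  "mk k T y = (\<lambda>s\<in>{1..k}. if s \<in> T then None else y s)"

context anc begin

lemma pb_ge: "s \<in> {1..k} \<Longrightarrow> \<alpha> \<le> pb s"
  using anch unfolding anchored_def pb_def by auto

lemma alpha_pos: "0 < \<alpha>" "\<alpha> \<le> 1" using anch unfolding anchored_def by auto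

lemma pb_le: "pb s \<le> 1"
proof -
  have "pb s \<le> (\<Sum>x\<in>PiE {1..k} Xs. \<mu> x)" unfolding pb_def
    using nnmu by (intro sum_mono) auto
  thus ?thesis using summu by simp
qed

lemma group_sum:
  assumes cG: "\<And>x. cond x \<Longrightarrow> Fs x \<subseteq> R0" and P: "P \<subseteq> Pow R0" and fR: "finite R0"
  shows "(\<Sum>F\<in>P. \<Sum>x\<in>PiE {1..k} Xs. if cond x \<and> Fs x = F then \<mu> x else 0)
       = (\<Sum>x\<in>PiE {1..k} Xs. if cond x \<and> Fs x \<in> P then \<mu> x else 0)"
proof -
  have fP: "finite P" using P fR by (meson finite_Pow_iff finite_subset)
  have "(\<Sum>F\<in>P. \<Sum>x\<in>PiE {1..k} Xs. if cond x \<and> Fs x = F then \<mu> x else 0)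
      = (\<Sum>x\<in>PiE {1..k} Xs. \<Sum>F\<in>P. if Fs x = F then (if cond x then \<mu> x else 0) else 0)"
    by (subst sum.swap) (auto intro!: sum.cong)
  also have "\<dots> = (\<Sum>x\<in>PiE {1..k} Xs. if cond x \<and> Fs x \<in> P then \<mu> x else 0)"
    using fP by (intro sum.cong refl) (simp add: sum.delta')
  finally show ?thesis .
qed

lemma keymu:
  assumes T: "T \<subseteq> {1..k}"
  shows "(\<Sum>x\<in>PiE {1..k} Xs. if mk k T (yof k Xperp x) = mk k T y then \<mu> x else 0)
       \<le> (1/\<alpha>) ^ card T * (\<Sum>x\<in>PiE {1..k} Xs. if yof k Xperp x = mk k T y then \<mu> x else 0)"
proof -
  define z where "z = mk k T y"
  define G where "G = {s\<in>{1..k}. z s \<noteq> None}"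
  define zv where "zv s = the (z s)" for s
  define R0 where "R0 = {1..k} - G"
  define cond where "cond x = (\<forall>s\<in>G. x s = zv s \<and> x s \<notin> Xperp s)" for x :: "nat \<Rightarrow> 'q"
  define \<pi> where "\<pi> F = (\<Sum>x\<in>PiE {1..k} Xs. if cond x \<and> Fs x = F then \<mu> x else 0)" for F
  have GK: "G \<subseteq> {1..k}" unfolding G_def by auto
  have TR0: "T \<subseteq> R0" using T unfolding R0_def G_def z_def mk_def by auto
  have fR0: "finite R0" unfolding R0_def by auto
  have zR0: "\<And>s. s \<in> R0 \<Longrightarrow> z s = None" unfolding R0_def G_def by auto
  have zG: "\<And>s. s \<in> G \<Longrightarrow> z s = Some (zv s)" unfolding G_def zv_def by auto
  have zext: "z \<in> extensional {1..k}" unfolding z_def mk_def by simp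
  have cG: "\<And>x. cond x \<Longrightarrow> Fs x \<subseteq> R0" unfolding cond_def Fs_def R0_def by auto
  have grp: "(\<Sum>F\<in>P. \<pi> F) = (\<Sum>x\<in>PiE {1..k} Xs. if cond x \<and> Fs x \<in> P then \<mu> x else 0)"
    if "P \<subseteq> Pow R0" for P
    unfolding \<pi>_def by (rule group_sum[OF cG that fR0])
  have hyp: "\<forall>F\<subseteq>R0. \<pi> F = (\<Prod>s\<in>F. pb s) * (\<Sum>F'\<in>Pow F. \<pi> F')"
  proof (intro allI impI)
    fix F assume F: "F \<subseteq> R0"
    have "(\<Sum>F'\<in>Pow F. \<pi> F') = (\<Sum>x\<in>PiE {1..k} Xs. if cond x \<and> Fs x \<in> Pow F then \<mu> x else 0)"
      using F by (intro grp) auto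
    also have "\<dots> = (\<Sum>x\<in>PiE {1..k} Xs. if cond x \<and> Fs x \<subseteq> F then \<mu> x else 0)" by simp
    finally have e: "(\<Sum>F'\<in>Pow F. \<pi> F') = \<dots>" .
    show "\<pi> F = (\<Prod>s\<in>F. pb s) * (\<Sum>F'\<in>Pow F. \<pi> F')"
      unfolding e unfolding \<pi>_def cond_def
      by (rule Hrel[OF GK]) (use F R0_def in auto)
  qed
  have pbR: "\<forall>s\<in>R0. 0 < pb s \<and> pb s \<le> 1"
    using pb_ge pb_le alpha_pos unfolding R0_def by (auto intro: less_le_trans)
  have pinn: "\<forall>F\<subseteq>R0. \<pi> F \<ge> 0" unfolding \<pi>_def using nnmu by (auto intro!: sum_nonneg)
  define C where "C = (\<Sum>F'\<in>Pow R0. \<pi> F')"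
  have Cnn: "C \<ge> 0" unfolding C_def using pinn by (auto intro!: sum_nonneg)
  have form: "\<forall>F\<subseteq>R0. \<pi> F = C * (\<Prod>s\<in>F. pb s) * (\<Prod>s\<in>R0-F. 1 - pb s)"
    unfolding C_def by (rule indep_pattern[OF fR0 pbR pinn hyp])
  have rhs: "(\<Sum>x\<in>PiE {1..k} Xs. if yof k Xperp x = z then \<mu> x else 0) = \<pi> R0"
    unfolding \<pi>_def
  proof (rule sum.cong)
    fix x assume x: "x \<in> PiE {1..k} Xs"
    have "yof k Xperp x = z \<longleftrightarrow> (\<forall>s\<in>{1..k}. yof k Xperp x s = z s)"
      using zext unfolding yof_def by (auto simp: fun_eq_iff extensional_def)
    also have "\<dots> \<longleftrightarrow> cond x \<and> Fs x = R0"
    proof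
      assume h: "\<forall>s\<in>{1..k}. yof k Xperp x s = z s"
      have "cond x" unfolding cond_def
      proof
        fix s assume s: "s \<in> G"
        hence "yof k Xperp x s = Some (zv s)" using h zG GK by auto
        thus "x s = zv s \<and> x s \<notin> Xperp s" using s GK unfolding yof_def by (auto split: if_splits)
      qed
      moreover have "\<forall>s\<in>R0. x s \<in> Xperp s"
      proof
        fix s assume s: "s \<in> R0"
        hence "yof k Xperp x s = None" using h zR0 unfolding R0_def by auto
        thus "x s \<in> Xperp s" using s unfolding yof_def R0_def by (auto split: if_splits)
      qed
      ultimately show "cond x \<and> Fs x = R0" using cG unfolding Fs_def R0_def by blast
    next
      assume h: "cond x \<and> Fs x = R0"
      show "\<forall>s\<in>{1..k}. yof k Xperp x s = z s"
      proof
        fix s assume s: "s \<in> {1..k}"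
        show "yof k Xperp x s = z s"
        proof (cases "s \<in> G")
          case True thus ?thesis using h zG s unfolding cond_def yof_def by auto
        next
          case False
          hence "s \<in> R0" using s unfolding R0_def by auto
          thus ?thesis using h zR0 s unfolding yof_def Fs_def by auto
        qed
      qed
    qed
    finally show "(if yof k Xperp x = z then \<mu> x else 0) = (if cond x \<and> Fs x = R0 then \<mu> x else 0)"
      by simp
  qed simp
  define P where "P = {F\<in>Pow R0. R0 - T \<subseteq> F}"
  have lhs: "(\<Sum>x\<in>PiE {1..k} Xs. if mk k T (yof k Xperp x) = z then \<mu> x else 0) = (\<Sum>F\<in>P. \<pi> F)"
  proof -
    have "(\<Sum>F\<in>P. \<pi> F) = (\<Sum>x\<in>PiE {1..k} Xs. if cond x \<and> Fs x \<in> P then \<mu> x else 0)"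
      by (rule grp) (auto simp: P_def)
    also have "\<dots> = (\<Sum>x\<in>PiE {1..k} Xs. if mk k T (yof k Xperp x) = z then \<mu> x else 0)"
    proof (rule sum.cong)
      fix x assume x: "x \<in> PiE {1..k} Xs"
      have "mk k T (yof k Xperp x) = z \<longleftrightarrow> (\<forall>s\<in>{1..k} - T. yof k Xperp x s = z s)"
        using zext unfolding mk_def z_def by (auto simp: fun_eq_iff extensional_def)
      also have "\<dots> \<longleftrightarrow> cond x \<and> Fs x \<in> P"
      proof
        assume h: "\<forall>s\<in>{1..k} - T. yof k Xperp x s = z s"
        have GT: "G \<subseteq> {1..k} - T" using TR0 GK unfolding R0_def by auto
        have "cond x" unfolding cond_def
        proof
          fix s assume s: "s \<in> G"
          hence "yof k Xperp x s = Some (zv s)" using h zG GT by auto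
          thus "x s = zv s \<and> x s \<notin> Xperp s" using s GK unfolding yof_def by (auto split: if_splits)
        qed
        moreover have "\<forall>s\<in>R0 - T. x s \<in> Xperp s"
        proof
          fix s assume s: "s \<in> R0 - T"
          hence "yof k Xperp x s = None" using h zR0 unfolding R0_def by auto
          thus "x s \<in> Xperp s" using s unfolding yof_def R0_def by (auto split: if_splits)
        qed
        ultimately show "cond x \<and> Fs x \<in> P" using cG unfolding P_def Fs_def R0_def by auto
      next
        assume h: "cond x \<and> Fs x \<in> P"
        show "\<forall>s\<in>{1..k} - T. yof k Xperp x s = z s"
        proof
          fix s assume s: "s \<in> {1..k} - T"
          show "yof k Xperp x s = z s"
          proof (cases "s \<in> G")
            case True thus ?thesis using h zG s unfolding cond_def yof_def by auto
          next
            case False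
            hence "s \<in> R0 - T" using s unfolding R0_def by auto
            hence "x s \<in> Xperp s" using h unfolding P_def Fs_def by auto
            thus ?thesis using zR0 \<open>s \<in> R0 - T\<close> s unfolding yof_def by auto
          qed
        qed
      qed
      finally show "(if cond x \<and> Fs x \<in> P then \<mu> x else 0) = (if mk k T (yof k Xperp x) = z then \<mu> x else 0)"
        by simp
    qed simp
    finally show ?thesis by simp
  qed
  have fT: "finite T" using T finite_subset by blast
  have Psum: "(\<Sum>F\<in>P. \<pi> F) = C * (\<Prod>s\<in>R0-T. pb s)"
  proof -
    have PI: "P = (\<lambda>F'. (R0 - T) \<union> F') ` Pow T" unfolding P_def using TR0 by auto
    have inj: "inj_on (\<lambda>F'. (R0 - T) \<union> F') (Pow T)" by (auto simp: inj_on_def)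
    have "(\<Sum>F\<in>P. \<pi> F) = (\<Sum>F'\<in>Pow T. \<pi> ((R0 - T) \<union> F'))"
      unfolding PI by (rule sum.reindex[OF inj, unfolded comp_def])
    also have "\<dots> = (\<Sum>F'\<in>Pow T. C * (\<Prod>s\<in>R0-T. pb s) * ((\<Prod>s\<in>F'. pb s) * (\<Prod>s\<in>T-F'. 1 - pb s)))"
    proof (rule sum.cong)
      fix F' assume F': "F' \<in> Pow T"
      have sub: "(R0 - T) \<union> F' \<subseteq> R0" using F' TR0 by auto
      have d1: "(\<Prod>s\<in>(R0 - T) \<union> F'. pb s) = (\<Prod>s\<in>R0-T. pb s) * (\<Prod>s\<in>F'. pb s)"
        using F' fR0 fT by (subst prod.union_disjoint) (auto intro: finite_subset)
      have "R0 - ((R0 - T) \<union> F') = T - F'" using TR0 by auto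
      thus "\<pi> ((R0 - T) \<union> F') = C * (\<Prod>s\<in>R0-T. pb s) * ((\<Prod>s\<in>F'. pb s) * (\<Prod>s\<in>T-F'. 1 - pb s))"
        using form sub d1 by (simp add: mult_ac)
    qed simp
    also have "\<dots> = C * (\<Prod>s\<in>R0-T. pb s) * (\<Sum>F'\<in>Pow T. (\<Prod>s\<in>F'. pb s) * (\<Prod>s\<in>T-F'. 1 - pb s))"
      by (simp add: sum_distrib_left)
    also have "(\<Sum>F'\<in>Pow T. (\<Prod>s\<in>F'. pb s) * (\<Prod>s\<in>T-F'. 1 - pb s)) = 1"
      using prodsum_id[OF fT order_refl, of pb] by simp
    finally show ?thesis by simp
  qed
  have piR0: "\<pi> R0 = C * (\<Prod>s\<in>R0-T. pb s) * (\<Prod>s\<in>T. pb s)"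
  proof -
    have "(\<Prod>s\<in>R0. pb s) = (\<Prod>s\<in>R0-T. pb s) * (\<Prod>s\<in>T. pb s)"
      using TR0 fR0 by (metis prod.subset_diff)
    thus ?thesis using form by simp
  qed
  have prodT: "\<alpha> ^ card T \<le> (\<Prod>s\<in>T. pb s)"
  proof -
    have "(\<Prod>s\<in>T. \<alpha>) \<le> (\<Prod>s\<in>T. pb s)"
      using pb_ge alpha_pos T by (intro prod_mono) auto
    thus ?thesis by simp
  qed
  have one: "1 \<le> (1/\<alpha>) ^ card T * (\<Prod>s\<in>T. pb s)"
  proof -
    have "(1/\<alpha>) ^ card T * \<alpha> ^ card T \<le> (1/\<alpha>) ^ card T * (\<Prod>s\<in>T. pb s)"
      using prodT alpha_pos by (intro mult_left_mono) auto
    moreover have "(1/\<alpha>) ^ card T * \<alpha> ^ card T = 1"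
      using alpha_pos by (simp add: power_mult_distrib[symmetric])
    ultimately show ?thesis by simp
  qed
  have Xnn: "0 \<le> C * (\<Prod>s\<in>R0-T. pb s)"
  proof -
    have "0 \<le> (\<Prod>s\<in>R0-T. pb s)" using pbR by (intro prod_nonneg) auto
    thus ?thesis using Cnn by simp
  qed
  have "C * (\<Prod>s\<in>R0-T. pb s) * 1 \<le> C * (\<Prod>s\<in>R0-T. pb s) * ((1/\<alpha>) ^ card T * (\<Prod>s\<in>T. pb s))"
    by (rule mult_left_mono[OF one Xnn])
  thus ?thesis unfolding z_def[symmetric] lhs rhs Psum piR0 by (simp add: mult_ac)
qed

end

lemma finite_Samp:
  assumes "\<forall>t\<in>{1..k}. finite (Xs t)"
  shows "finite (Samp k n m Xs)"
proof -
  have "finite (PiE {1..k} Xs)" using assms by (intro finite_PiE) auto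
  moreover have "finite (Dsets k)" unfolding Dsets_def by (rule finite_subset[of _ "Pow {1..k}"]) auto
  ultimately show ?thesis unfolding Samp_def using assms by (intro finite_cartesian_product finite_PiE) auto
qed

lemma pr_fst:
  fixes \<mu> :: "(nat \<Rightarrow> 'q) \<Rightarrow> real"
  assumes finX: "\<forall>t\<in>{1..k}. finite (Xs t)" and summu: "(\<Sum>x\<in>PiE {1..k} Xs. \<mu> x) = 1"
    and i: "i \<in> {1..n}"
  shows "pr (Samp k n m Xs) (wt k n m \<mu>) (\<lambda>\<omega>. P (fst \<omega> i))
       = (\<Sum>d\<in>PiE {1..m} (\<lambda>_. Dsets k). \<Prod>j\<in>{1..m}. 1 / real (card (Dsets k)))
         * (\<Sum>x\<in>PiE {1..k} Xs. if P x then \<mu> x else 0)"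
proof -
  define PX where "PX = PiE {1..k} Xs"
  define DD where "DD = PiE {1..m} (\<lambda>_. Dsets k)"
  define cD where "cD = (\<Sum>d\<in>DD. \<Prod>j\<in>{1..m}. 1 / real (card (Dsets k)))"
  have fPX: "finite PX" unfolding PX_def using finX by (intro finite_PiE) auto
  have fDs: "finite (Dsets k)" unfolding Dsets_def by (rule finite_subset[of _ "Pow {1..k}"]) auto
  have fDD: "finite DD" unfolding DD_def using fDs by (intro finite_PiE) auto
  define f where "f j a = (if j = i then (if P a then \<mu> a else 0) else \<mu> a)" for j a
  have "pr (Samp k n m Xs) (wt k n m \<mu>) (\<lambda>\<omega>. P (fst \<omega> i))
      = (\<Sum>(xs,d)\<in>PiE {1..n} (\<lambda>_. PX) \<times> DD. if P (xs i) then (\<Prod>j\<in>{1..n}. \<mu> (xs j)) * (\<Prod>j\<in>{1..m}. 1 / real (card (Dsets k))) else 0)"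
    unfolding pr_def Samp_def wt_def PX_def DD_def by (intro sum.cong) auto
  also have "\<dots> = (\<Sum>xs\<in>PiE {1..n} (\<lambda>_. PX). \<Sum>d\<in>DD. if P (xs i) then (\<Prod>j\<in>{1..n}. \<mu> (xs j)) * (\<Prod>j\<in>{1..m}. 1 / real (card (Dsets k))) else 0)"
    by (rule sum.cartesian_product[symmetric])
  also have "\<dots> = (\<Sum>xs\<in>PiE {1..n} (\<lambda>_. PX). (\<Prod>j\<in>{1..n}. f j (xs j)) * cD)"
  proof (rule sum.cong)
    fix xs assume xs: "xs \<in> PiE {1..n} (\<lambda>_. PX)"
    have "(\<Prod>j\<in>{1..n}. f j (xs j)) = (if P (xs i) then (\<Prod>j\<in>{1..n}. \<mu> (xs j)) else 0)"
    proof (cases "P (xs i)")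
      case True thus ?thesis unfolding f_def by (auto intro!: prod.cong)
    next
      case False thus ?thesis unfolding f_def using i by (subst prod_zero) auto
    qed
    thus "(\<Sum>d\<in>DD. if P (xs i) then (\<Prod>j\<in>{1..n}. \<mu> (xs j)) * (\<Prod>j\<in>{1..m}. 1 / real (card (Dsets k))) else 0)
        = (\<Prod>j\<in>{1..n}. f j (xs j)) * cD"
      unfolding cD_def by (simp add: sum_distrib_left)
  qed simp
  also have "\<dots> = (\<Prod>j\<in>{1..n}. \<Sum>a\<in>PX. f j a) * cD"
    by (subst prod_sum_PiE) (use fPX in \<open>auto simp: sum_distrib_right\<close>)
  also have "(\<Prod>j\<in>{1..n}. \<Sum>a\<in>PX. f j a) = (\<Sum>a\<in>PX. f i a) * (\<Prod>j\<in>{1..n}-{i}. \<Sum>a\<in>PX. f j a)"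
    using i by (subst prod.remove[of _ i]) auto
  also have "(\<Prod>j\<in>{1..n}-{i}. \<Sum>a\<in>PX. f j a) = 1"
    using summu unfolding f_def PX_def by (intro prod.neutral) auto
  also have "(\<Sum>a\<in>PX. f i a) = (\<Sum>x\<in>PiE {1..k} Xs. if P x then \<mu> x else 0)"
    unfolding f_def PX_def by simp
  finally show ?thesis unfolding cD_def DD_def by simp
qed

lemma Yrv_yof: "Yrv k Xperp i \<omega> = yof k Xperp (fst \<omega> i)"
  unfolding Yrv_def yof_def by simp

lemma Yrv_ext: "Yrv k Xperp i \<omega> \<in> extensional {1..k}"
  unfolding Yrv_def by simp

lemma condY_mk:
  assumes T: "T \<subseteq> {1..k}" and Yext: "Y \<omega> \<in> extensional {1..k}"
  shows "condY Y T ({1..k} - T) y \<omega> \<longleftrightarrow> Y \<omega> = mk k T y"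
proof
  assume h: "condY Y T ({1..k} - T) y \<omega>"
  show "Y \<omega> = mk k T y"
  proof (rule ext)
    fix s
    show "Y \<omega> s = mk k T y s"
    proof (cases "s \<in> {1..k}")
      case True
      show ?thesis
      proof (cases "s \<in> T")
        case True
        hence "restrict (Y \<omega>) T s = (\<lambda>s\<in>T. None) s" using h unfolding condY_def by metis
        thus ?thesis using True T unfolding mk_def by auto
      next
        case False
        hence "restrict (Y \<omega>) ({1..k} - T) s = restrict y ({1..k} - T) s" using h unfolding condY_def by metis
        thus ?thesis using False \<open>s \<in> {1..k}\<close> unfolding mk_def by auto
      qed
    next
      case False
      thus ?thesis using Yext unfolding mk_def extensional_def by auto
    qed
  qed
next
  assume "Y \<omega> = mk k T y"
  thus "condY Y T ({1..k} - T) y \<omega>" unfolding condY_def mk_def using T by (auto simp: fun_eq_iff)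
qed

lemma condY_minus:
  "condY Y {} ({1..k} - {t}) y \<omega> \<longleftrightarrow> restrict (Y \<omega>) ({1..k} - {t}) = restrict y ({1..k} - {t})"
  unfolding condY_def by (simp add: restrict_def)

lemma pr_nonneg:
  assumes "\<forall>\<omega>\<in>\<Omega>. 0 \<le> w \<omega>"
  shows "0 \<le> pr \<Omega> w E"
  unfolding pr_def using assms by (auto intro!: sum_nonneg)

lemma pr_group:
  assumes fin: "finite \<Omega>" and A: "A \<subseteq> Y ` \<Omega>"
  shows "(\<Sum>y\<in>A. pr \<Omega> w (\<lambda>\<omega>. Y \<omega> = y)) = pr \<Omega> w (\<lambda>\<omega>. Y \<omega> \<in> A)"
proof -
  have fA: "finite A" using A fin finite_surj by blast
  have "(\<Sum>y\<in>A. pr \<Omega> w (\<lambda>\<omega>. Y \<omega> = y)) = (\<Sum>\<omega>\<in>\<Omega>. \<Sum>y\<in>A. if Y \<omega> = y then w \<omega> else 0)"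
    unfolding pr_def by (rule sum.swap)
  also have "\<dots> = pr \<Omega> w (\<lambda>\<omega>. Y \<omega> \<in> A)"
    unfolding pr_def using fA by (intro sum.cong refl) (simp add: sum.delta)
  finally show ?thesis .
qed

lemma pr_zero_out:
  assumes "y \<notin> Y ` \<Omega>"
  shows "pr \<Omega> w (\<lambda>\<omega>. Y \<omega> = y) = 0"
  unfolding pr_def using assms by (intro sum.neutral) auto

theorem lemma4p6:
  fixes k n m :: nat and Xs :: "nat \<Rightarrow> 'q set" and As :: "nat \<Rightarrow> 'a set"
    and \<mu> :: "(nat \<Rightarrow> 'q) \<Rightarrow> real" and V :: "(nat \<Rightarrow> 'q) \<Rightarrow> (nat \<Rightarrow> 'a) \<Rightarrow> bool"
    and \<alpha> :: real and Xperp :: "nat \<Rightarrow> 'q set"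
    and f :: "nat \<Rightarrow> (nat \<Rightarrow> 'q) \<Rightarrow> (nat \<Rightarrow> 'a)"
    and i t :: nat and S :: "nat set"
  assumes game: "is_game k Xs As \<mu>"
    and anch: "anchored k Xs \<mu> \<alpha> Xperp"
    and m_ge: "1 \<le> m" and m_lt: "m < n"
    and strat: "strategy k n Xs As f"
    and W_pos: "pr (Samp k n m Xs) (wt k n m \<mu>) (Wev k n m f V) > 0"
    and i_in: "i \<in> {1..m}"
    and S_sub: "S \<subseteq> {1..k}"
    and t_in: "t \<in> {1..k} - S"
  shows "tvd (Usupp k n m Xs Xperp f i)
            (Pdist k n m Xs \<mu> Xperp f V i S ({1..k} - S))
            (Pdist k n m Xs \<mu> Xperp f V i (S \<union> {t}) ({1..k} - S - {t}))
         \<le> 2 * (1 / \<alpha>) ^ (card S + 1) *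
           tvd (Usupp k n m Xs Xperp f i)
            (Pdist k n m Xs \<mu> Xperp f V i {} {1..k})
            (Pdist k n m Xs \<mu> Xperp f V i {} ({1..k} - {t}))"
proof -
  have finX: "\<forall>t\<in>{1..k}. finite (Xs t)" using game unfolding is_game_def by auto
  have nnmu: "\<forall>x\<in>PiE {1..k} Xs. 0 \<le> \<mu> x" using game unfolding is_game_def by auto
  have summu: "(\<Sum>x\<in>PiE {1..k} Xs. \<mu> x) = 1" using game unfolding is_game_def by auto
  interpret anc k Xs \<mu> \<alpha> Xperp using finX anch nnmu summu by unfold_locales
  define \<Omega> where "\<Omega> = Samp k n m Xs"
  define w where "w = wt k n m \<mu>"
  define Y where "Y = Yrv k Xperp i"
  define R where "R = (\<lambda>\<omega>. (Omg_minus k n m Xperp i \<omega>, Zrv k n m f \<omega>))"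
  define E where "E = Wev k n m f V"
  define PY where "PY y = pr \<Omega> w (\<lambda>\<omega>. Y \<omega> = y)" for y
  define cc where "cc v r = cpr \<Omega> w R (\<lambda>\<omega>. E \<omega> \<and> Y \<omega> = v) r" for v r
  define cm where "cm v r = cpr \<Omega> w R (\<lambda>\<omega>. E \<omega> \<and> restrict (Y \<omega>) ({1..k} - {t}) = restrict v ({1..k} - {t})) r" for v r
  define YO where "YO = Y ` \<Omega>"
  define RO where "RO = R ` \<Omega>"
  have U: "Usupp k n m Xs Xperp f i = YO \<times> RO"
    unfolding Usupp_def YO_def RO_def Y_def R_def \<Omega>_def ..
  have finO: "finite \<Omega>" unfolding \<Omega>_def using finite_Samp[OF finX] .
  have fYO: "finite YO" and fRO: "finite RO" unfolding YO_def RO_def using finO by auto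
  have in_n: "i \<in> {1..n}" using i_in m_lt by auto
  define cD where "cD = (\<Sum>d\<in>PiE {1..m} (\<lambda>_. Dsets k). \<Prod>j\<in>{1..m}. 1 / real (card (Dsets k)))"
  have cDnn: "0 \<le> cD" unfolding cD_def by (auto intro!: sum_nonneg prod_nonneg)
  have prY: "pr \<Omega> w (\<lambda>\<omega>. P (Y \<omega>)) = cD * (\<Sum>x\<in>PiE {1..k} Xs. if P (yof k Xperp x) then \<mu> x else 0)" for P
    unfolding \<Omega>_def w_def Y_def Yrv_yof cD_def by (rule pr_fst[OF finX summu in_n])
  have wnn: "\<forall>\<omega>\<in>\<Omega>. 0 \<le> w \<omega>"
  proof
    fix \<omega> assume "\<omega> \<in> \<Omega>"
    then obtain xs d where "\<omega> = (xs, d)" "xs \<in> PiE {1..n} (\<lambda>_. PiE {1..k} Xs)"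
      unfolding \<Omega>_def Samp_def by auto
    thus "0 \<le> w \<omega>" unfolding w_def wt_def using nnmu by (auto intro!: prod_nonneg mult_nonneg_nonneg)
  qed
  have PYnn: "0 \<le> PY y" for y unfolding PY_def by (rule pr_nonneg[OF wnn])
  have keyS: "pr \<Omega> w (\<lambda>\<omega>. mk k T (Y \<omega>) = mk k T y) \<le> (1/\<alpha>) ^ card T * PY (mk k T y)"
    if T: "T \<subseteq> {1..k}" for T y
  proof -
    have "pr \<Omega> w (\<lambda>\<omega>. mk k T (Y \<omega>) = mk k T y)
        = cD * (\<Sum>x\<in>PiE {1..k} Xs. if mk k T (yof k Xperp x) = mk k T y then \<mu> x else 0)"
      by (rule prY)
    also have "\<dots> \<le> cD * ((1/\<alpha>) ^ card T * (\<Sum>x\<in>PiE {1..k} Xs. if yof k Xperp x = mk k T y then \<mu> x else 0))"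
      by (rule mult_left_mono[OF keymu[OF T] cDnn])
    also have "\<dots> = (1/\<alpha>) ^ card T * PY (mk k T y)"
      unfolding PY_def using prY[of "\<lambda>z. z = mk k T y"] by simp
    finally show ?thesis .
  qed
  have L: "(\<Sum>y\<in>YO. PY y * g (mk k T y)) \<le> (1/\<alpha>) ^ card T * (\<Sum>y\<in>YO. PY y * g y)"
    if T: "T \<subseteq> {1..k}" and gnn: "\<And>v. 0 \<le> g v" for T g
  proof -
    define mkT :: "(nat \<Rightarrow> 'q option) \<Rightarrow> nat \<Rightarrow> 'q option" where "mkT = mk k T"
    have "(\<Sum>y\<in>YO. PY y * g (mkT y)) = (\<Sum>v\<in>mkT ` YO. \<Sum>y\<in>{y\<in>YO. mkT y = v}. PY y * g (mkT y))"
      using fYO by (rule sum.image_gen)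
    also have "\<dots> = (\<Sum>v\<in>mkT ` YO. g v * (\<Sum>y\<in>{y\<in>YO. mkT y = v}. PY y))"
      by (intro sum.cong refl) (auto simp: sum_distrib_left mult.commute intro!: sum.cong)
    also have "\<dots> \<le> (\<Sum>v\<in>mkT ` YO. g v * ((1/\<alpha>) ^ card T * PY v))"
    proof (rule sum_mono)
      fix v assume v: "v \<in> mkT ` YO"
      then obtain y0 where y0: "v = mk k T y0" unfolding mkT_def by auto
      have "(\<Sum>y\<in>{y\<in>YO. mkT y = v}. PY y) = pr \<Omega> w (\<lambda>\<omega>. Y \<omega> \<in> {y\<in>YO. mkT y = v})"
        unfolding PY_def by (rule pr_group[OF finO]) (auto simp: YO_def)
      also have "\<dots> = pr \<Omega> w (\<lambda>\<omega>. mk k T (Y \<omega>) = mk k T y0)"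
        unfolding pr_def YO_def mkT_def y0 by (intro sum.cong refl) auto
      also have "\<dots> \<le> (1/\<alpha>) ^ card T * PY v"
        unfolding y0 by (rule keyS[OF T])
      finally show "g v * (\<Sum>y\<in>{y\<in>YO. mkT y = v}. PY y) \<le> g v * ((1/\<alpha>) ^ card T * PY v)"
        by (rule mult_left_mono[OF _ gnn])
    qed
    also have "\<dots> = (1/\<alpha>) ^ card T * (\<Sum>v\<in>mkT ` YO. PY v * g v)"
      by (simp add: sum_distrib_left mult_ac)
    also have "(\<Sum>v\<in>mkT ` YO. PY v * g v) \<le> (\<Sum>y\<in>YO. PY y * g y)"
    proof -
      have "(\<Sum>v\<in>mkT ` YO. PY v * g v) = (\<Sum>v\<in>mkT ` YO \<inter> YO. PY v * g v)"
      proof (rule sum.mono_neutral_right)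
        show "finite (mkT ` YO)" using fYO by simp
        show "mkT ` YO \<inter> YO \<subseteq> mkT ` YO" by blast
        show "\<forall>v\<in>mkT ` YO - mkT ` YO \<inter> YO. PY v * g v = 0"
          unfolding PY_def YO_def using pr_zero_out by fastforce
      qed
      also have "\<dots> \<le> (\<Sum>y\<in>YO. PY y * g y)"
        using fYO PYnn gnn by (intro sum_mono2) auto
      finally show ?thesis .
    qed
    hence "(1/\<alpha>) ^ card T * (\<Sum>v\<in>mkT ` YO. PY v * g v) \<le> (1/\<alpha>) ^ card T * (\<Sum>y\<in>YO. PY y * g y)"
      using alpha_pos by (intro mult_left_mono) auto
    finally show ?thesis unfolding mkT_def .
  qed
  have Pd: "Pdist k n m Xs \<mu> Xperp f V i T ({1..k} - T) = (\<lambda>(y,r). PY y * cc (mk k T y) r)"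
    if T: "T \<subseteq> {1..k}" for T
    unfolding Pdist_def prod_cond_def PY_def cc_def \<Omega>_def w_def Y_def R_def E_def
    by (simp only: condY_mk[where Y="Yrv k Xperp i", OF T Yrv_ext])
  have Pd0: "Pdist k n m Xs \<mu> Xperp f V i {} {1..k} = (\<lambda>(y,r). PY y * cc (mk k {} y) r)"
    using Pd[of "{}"] by simp
  have PdS: "Pdist k n m Xs \<mu> Xperp f V i S ({1..k} - S) = (\<lambda>(y,r). PY y * cc (mk k S y) r)"
    using Pd[OF S_sub] .
  have PdS': "Pdist k n m Xs \<mu> Xperp f V i (S \<union> {t}) ({1..k} - S - {t}) = (\<lambda>(y,r). PY y * cc (mk k (insert t S) y) r)"
  proof -
    have "{1..k} - S - {t} = {1..k} - insert t S" by auto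
    moreover have "S \<union> {t} = insert t S" by auto
    moreover have "insert t S \<subseteq> {1..k}" using S_sub t_in by auto
    ultimately show ?thesis using Pd[of "insert t S"] by simp
  qed
  have Pdm: "Pdist k n m Xs \<mu> Xperp f V i {} ({1..k} - {t}) = (\<lambda>(y,r). PY y * cm y r)"
    unfolding Pdist_def prod_cond_def PY_def cm_def \<Omega>_def w_def Y_def R_def E_def
    by (simp only: condY_minus)
  define D where "D v = (\<Sum>r\<in>RO. \<bar>cc (mk k {} v) r - cm v r\<bar>)" for v
  have Dnn: "0 \<le> D v" for v unfolding D_def by (auto intro!: sum_nonneg)
  have mk0: "mk k {} (mk k T y) = mk k T y" for T and y :: "nat \<Rightarrow> 'q option"
    unfolding mk_def by (auto simp: fun_eq_iff)
  have cmeq: "cm (mk k S y) = cm (mk k (insert t S) y)" for y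
  proof -
    have "restrict (mk k S y) ({1..k} - {t}) = restrict (mk k (insert t S) y) ({1..k} - {t})"
      unfolding mk_def by (auto simp: fun_eq_iff)
    thus ?thesis unfolding cm_def by simp
  qed
  define Q where "Q = (\<Sum>y\<in>YO. PY y * D y)"
  have Qnn: "0 \<le> Q" unfolding Q_def using PYnn Dnn by (auto intro!: sum_nonneg)
  have RHS: "tvd (YO \<times> RO) (\<lambda>(y,r). PY y * cc (mk k {} y) r) (\<lambda>(y,r). PY y * cm y r) = Q / 2"
  proof -
    have "tvd (YO \<times> RO) (\<lambda>(y,r). PY y * cc (mk k {} y) r) (\<lambda>(y,r). PY y * cm y r)
        = (1/2) * (\<Sum>y\<in>YO. \<Sum>r\<in>RO. \<bar>PY y * cc (mk k {} y) r - PY y * cm y r\<bar>)"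
      unfolding tvd_def by (subst sum.cartesian_product) (auto intro!: sum.cong)
    also have "(\<Sum>y\<in>YO. \<Sum>r\<in>RO. \<bar>PY y * cc (mk k {} y) r - PY y * cm y r\<bar>) = Q"
      unfolding Q_def D_def
      by (intro sum.cong refl) (simp add: sum_distrib_left abs_mult PYnn right_diff_distrib[symmetric])
    finally show ?thesis by simp
  qed
  have LHS: "tvd (YO \<times> RO) (\<lambda>(y,r). PY y * cc (mk k S y) r) (\<lambda>(y,r). PY y * cc (mk k (insert t S) y) r)
      \<le> (1/2) * ((\<Sum>y\<in>YO. PY y * D (mk k S y)) + (\<Sum>y\<in>YO. PY y * D (mk k (insert t S) y)))"
  proof -
    have "tvd (YO \<times> RO) (\<lambda>(y,r). PY y * cc (mk k S y) r) (\<lambda>(y,r). PY y * cc (mk k (insert t S) y) r)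
        = (1/2) * (\<Sum>y\<in>YO. \<Sum>r\<in>RO. \<bar>PY y * cc (mk k S y) r - PY y * cc (mk k (insert t S) y) r\<bar>)"
      unfolding tvd_def by (subst sum.cartesian_product) (auto intro!: sum.cong)
    also have "(\<Sum>y\<in>YO. \<Sum>r\<in>RO. \<bar>PY y * cc (mk k S y) r - PY y * cc (mk k (insert t S) y) r\<bar>)
        \<le> (\<Sum>y\<in>YO. PY y * D (mk k S y) + PY y * D (mk k (insert t S) y))"
    proof (rule sum_mono)
      fix y assume "y \<in> YO"
      have "(\<Sum>r\<in>RO. \<bar>PY y * cc (mk k S y) r - PY y * cc (mk k (insert t S) y) r\<bar>)
          = PY y * (\<Sum>r\<in>RO. \<bar>cc (mk k S y) r - cc (mk k (insert t S) y) r\<bar>)"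
        by (simp add: sum_distrib_left abs_mult PYnn right_diff_distrib[symmetric])
      also have "(\<Sum>r\<in>RO. \<bar>cc (mk k S y) r - cc (mk k (insert t S) y) r\<bar>) \<le> D (mk k S y) + D (mk k (insert t S) y)"
        unfolding D_def mk0 sum.distrib[symmetric] cmeq
        by (intro sum_mono) linarith
      hence "PY y * (\<Sum>r\<in>RO. \<bar>cc (mk k S y) r - cc (mk k (insert t S) y) r\<bar>) \<le> PY y * (D (mk k S y) + D (mk k (insert t S) y))"
        by (rule mult_left_mono[OF _ PYnn])
      finally show "(\<Sum>r\<in>RO. \<bar>PY y * cc (mk k S y) r - PY y * cc (mk k (insert t S) y) r\<bar>)
          \<le> PY y * D (mk k S y) + PY y * D (mk k (insert t S) y)" by (simp add: distrib_left)
    qed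
    finally show ?thesis by (simp add: sum.distrib)
  qed
  have fS: "finite S" using S_sub finite_subset by blast
  have cardI: "card (insert t S) = card S + 1" using fS t_in by simp
  have L1: "(\<Sum>y\<in>YO. PY y * D (mk k S y)) \<le> (1/\<alpha>) ^ card S * Q"
    unfolding Q_def by (rule L[OF S_sub Dnn])
  have L2: "(\<Sum>y\<in>YO. PY y * D (mk k (insert t S) y)) \<le> (1/\<alpha>) ^ (card S + 1) * Q"
    unfolding Q_def cardI[symmetric] by (rule L) (use S_sub t_in Dnn in auto)
  have ainv: "1 \<le> 1/\<alpha>" using alpha_pos by simp
  have pw: "(1/\<alpha>) ^ card S \<le> (1/\<alpha>) ^ (card S + 1)"
    by (rule power_increasing[OF _ ainv]) simp
  have "(1/\<alpha>) ^ card S * Q \<le> (1/\<alpha>) ^ (card S + 1) * Q"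
    by (rule mult_right_mono[OF pw Qnn])
  hence fin: "(1/2) * ((\<Sum>y\<in>YO. PY y * D (mk k S y)) + (\<Sum>y\<in>YO. PY y * D (mk k (insert t S) y)))
      \<le> 2 * (1/\<alpha>) ^ (card S + 1) * (Q / 2)"
  proof -
    have e: "2 * (1/\<alpha>) ^ (card S + 1) * (Q / 2) = (1/\<alpha>) ^ (card S + 1) * Q" by simp
    have aux: "1/2 * (X1 + X2) \<le> b" if "X1 \<le> a" "X2 \<le> b" "a \<le> b" for X1 X2 a b :: real
      using that by (simp add: field_simps)
    show ?thesis unfolding e by (rule aux[OF L1 L2 \<open>(1/\<alpha>) ^ card S * Q \<le> (1/\<alpha>) ^ (card S + 1) * Q\<close>])
  qed
  show ?thesis
    unfolding U PdS PdS' Pd0 Pdm RHS using LHS fin by linarith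
qed

end
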